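(* Let $\ell\in\{1,2\}$ and let ${\cal H}\subset{\cal H}_0$, $a_\ell$, $C_{{\rm G1},\ell}$, $C_{{\rm G2},\ell}$, ${\mathcal A}_\ell$ be as in the context (the standing assumptions there hold), and let $0<C_{{\rm qo},\ell}<\infty$. Let $({\cal H}_N)_{N=0}^\infty$ be a sequence of finite-dimensional subspaces of ${\cal H}$ such that, for every $N$ and every $f\in{\cal H}_0$, the Galerkin solution $u_N\in{\cal H}_N$ of $a_\ell(u_N,v_N)=(f,v_N)_{{\cal H}_0}$ for all $v_N\in{\cal H}_N$ exists, is unique, and satisfies $$\|u-u_N\|_{{\cal H}}\le C_{{\rm qo},\ell}\|(I-\Pi_N)u\|_{{\cal H}},$$ where $\Pi_N:{\cal H}\to{\cal H}_N$ is the ${\cal H}$-orthogonal projection and $u\in{\cal H}$ is the solution of $a_\ell(u,v)=(f,v)_{{\cal H}_0}$ for all $v\in{\cal H}$. Then for every $N$, $$\inf_{u_N\in{\cal H}_N\setminus\{0\}}\sup_{v_N\in{\cal H}_N\setminus\{0\}}\frac{|a_\ell(u_N,v_N)|}{\|u_N\|_{{\cal H}}\|v_N\|_{{\cal H}}}\ge\frac{1}{(C_{{\rm G1},\ell})^{-1}\Big(1+C_{{\rm G2},\ell}(1+C_{{\rm qo},\ell})\|{\mathcal A}_\ell^{-1}\|_{{\cal H}_0\to{\cal H}}\Big)}.$$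
   Context: Standing assumptions: ${\cal H}\subset{\cal H}_0$ are complex Hilbert spaces with $\|v\|_{{\cal H}_0}\le\|v\|_{{\cal H}}$ for $v\in{\cal H}$, and ${\cal H}_0$ is identified with its dual so that ${\cal H}\subset{\cal H}_0\subset{\cal H}^*$. ${\mathcal D}:{\cal H}\to{\cal H}_0$ is linear with $\|{\mathcal D}\|_{{\cal H}\to{\cal H}_0}\le 1$; $b(\cdot,\cdot)$ is a continuous sesquilinear form on ${\cal H}$; for $\ell=1,2$, $\mu_\ell^{-1}:{\cal H}_0\to{\cal H}_0$ and $\epsilon_\ell:{\cal H}_0\to{\cal H}_0$ are bounded linear operators, and $a_\ell(u,v):=(\mu_\ell^{-1}{\mathcal D}u,{\mathcal D}v)_{{\cal H}_0}+b(u,v)-(\epsilon_\ell u,v)_{{\cal H}_0}$. For $\ell=1,2$ there exist $C_{{\rm G1},\ell},C_{{\rm G2},\ell}>0$ with $|a_\ell(v,v)+C_{{\rm G2},\ell}\|v\|_{{\cal H}_0}^2|\ge C_{{\rm G1},\ell}\|v\|_{{\cal H}}^2$ for all $v\in{\cal H}$. ${\mathcal A}_\ell:{\cal H}\to{\cal H}^*$ is defined by $\langle{\mathcal A}_\ell u,v\rangle_{{\cal H}^*\times{\cal H}}=a_\ell(u,v)$, and $\|{\mathcal A}_\ell^{-1}\|_{{\cal H}_0\to{\cal H}}$ is the norm of the solution map $f\mapsto u$ from ${\cal H}_0$ to ${\cal H}$. *)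

theory Defs
  imports "HOL-Analysis.Analysis"
begin

text \<open>There is no complex-vector-space type class in the distribution, so the
complex scalar multiplication sc is an explicit parameter satisfying the module axioms.\<close>

definition cvs :: "(complex \<Rightarrow> 'a::ab_group_add \<Rightarrow> 'a) \<Rightarrow> bool" where
  "cvs sc \<longleftrightarrow> (\<forall>c x y. sc c (x + y) = sc c x + sc c y) \<and>
     (\<forall>c d x. sc (c + d) x = sc c x + sc d x) \<and>
     (\<forall>c d x. sc c (sc d x) = sc (c * d) x) \<and> (\<forall>x. sc 1 x = x)"

definition csubsp :: "(complex \<Rightarrow> 'a::ab_group_add \<Rightarrow> 'a) \<Rightarrow> 'a set \<Rightarrow> bool" where
  "csubsp sc S \<longleftrightarrow> 0 \<in> S \<and> (\<forall>x\<in>S. \<forall>y\<in>S. x + y \<in> S) \<and> (\<forall>c. \<forall>x\<in>S. sc c x \<in> S)"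

definition cinner_on :: "(complex \<Rightarrow> 'a::ab_group_add \<Rightarrow> 'a) \<Rightarrow> ('a \<Rightarrow> 'a \<Rightarrow> complex) \<Rightarrow> 'a set \<Rightarrow> bool" where
  "cinner_on sc ip S \<longleftrightarrow>
     (\<forall>x\<in>S. \<forall>y\<in>S. \<forall>z\<in>S. ip (x + y) z = ip x z + ip y z) \<and>
     (\<forall>c. \<forall>x\<in>S. \<forall>y\<in>S. ip (sc c x) y = c * ip x y) \<and>
     (\<forall>x\<in>S. \<forall>y\<in>S. ip y x = cnj (ip x y)) \<and>
     (\<forall>x\<in>S. 0 \<le> Re (ip x x)) \<and>
     (\<forall>x\<in>S. ip x x = 0 \<longrightarrow> x = 0)"

definition ip_norm :: "('a \<Rightarrow> 'a \<Rightarrow> complex) \<Rightarrow> 'a \<Rightarrow> real" where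
  "ip_norm ip x = sqrt (Re (ip x x))"

definition complete_wrt :: "('a::ab_group_add \<Rightarrow> 'a \<Rightarrow> complex) \<Rightarrow> 'a set \<Rightarrow> bool" where
  "complete_wrt ip S \<longleftrightarrow> (\<forall>X. (\<forall>n. X n \<in> S) \<and>
       (\<forall>e>0. \<exists>M. \<forall>m\<ge>M. \<forall>n\<ge>M. ip_norm ip (X m - X n) < e) \<longrightarrow>
       (\<exists>x\<in>S. (\<lambda>n. ip_norm ip (X n - x)) \<longlonglongrightarrow> 0))"

definition hilbert_on :: "(complex \<Rightarrow> 'a::ab_group_add \<Rightarrow> 'a) \<Rightarrow> ('a \<Rightarrow> 'a \<Rightarrow> complex) \<Rightarrow> 'a set \<Rightarrow> bool" where
  "hilbert_on sc ip S \<longleftrightarrow> csubsp sc S \<and> cinner_on sc ip S \<and> complete_wrt ip S"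

definition clinear_on :: "(complex \<Rightarrow> 'a::ab_group_add \<Rightarrow> 'a) \<Rightarrow> 'a set \<Rightarrow> ('a \<Rightarrow> 'a) \<Rightarrow> bool" where
  "clinear_on sc S f \<longleftrightarrow> (\<forall>x\<in>S. \<forall>y\<in>S. f (x + y) = f x + f y) \<and>
     (\<forall>c. \<forall>x\<in>S. f (sc c x) = sc c (f x))"

definition sesq_on :: "(complex \<Rightarrow> 'a::ab_group_add \<Rightarrow> 'a) \<Rightarrow> 'a set \<Rightarrow> ('a \<Rightarrow> 'a \<Rightarrow> complex) \<Rightarrow> bool" where
  "sesq_on sc S b \<longleftrightarrow>
     (\<forall>x\<in>S. \<forall>y\<in>S. \<forall>z\<in>S. b (x + y) z = b x z + b y z) \<and>
     (\<forall>x\<in>S. \<forall>y\<in>S. \<forall>z\<in>S. b x (y + z) = b x y + b x z) \<and>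
     (\<forall>c. \<forall>x\<in>S. \<forall>y\<in>S. b (sc c x) y = c * b x y) \<and>
     (\<forall>c. \<forall>x\<in>S. \<forall>y\<in>S. b x (sc c y) = cnj c * b x y)"

definition fin_dim_subsp :: "(complex \<Rightarrow> 'a::ab_group_add \<Rightarrow> 'a) \<Rightarrow> 'a set \<Rightarrow> bool" where
  "fin_dim_subsp sc S \<longleftrightarrow> (\<exists>B. finite B \<and> S = range (\<lambda>c. \<Sum>b\<in>B. sc (c b) b))"

definition oproj :: "('a::ab_group_add \<Rightarrow> 'a \<Rightarrow> complex) \<Rightarrow> 'a set \<Rightarrow> 'a \<Rightarrow> 'a" where
  "oproj ip S x = (THE p. p \<in> S \<and> (\<forall>w\<in>S. ip (x - p) w = 0))"

text \<open>Norm of the solution map f \<mapsto> u from H0 (the whole type, norm from ip0)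
  to H (set Hs, norm from ipH), where u solves a(u,v) = (f,v)_0 for all v in Hs.\<close>
definition solmap_norm :: "('a::ab_group_add \<Rightarrow> 'a \<Rightarrow> complex) \<Rightarrow> ('a \<Rightarrow> 'a \<Rightarrow> complex) \<Rightarrow> 'a set
     \<Rightarrow> ('a \<Rightarrow> 'a \<Rightarrow> complex) \<Rightarrow> real" where
  "solmap_norm ip0 ipH Hs a = Sup {ip_norm ipH u / ip_norm ip0 f | u f.
       f \<noteq> 0 \<and> u \<in> Hs \<and> (\<forall>v\<in>Hs. a u v = ip0 f v)}"

text \<open>The discrete inf-sup constant, in the extended reals (so that inf over the empty set is +\<infinity>).\<close>
definition infsup :: "('a::ab_group_add \<Rightarrow> 'a \<Rightarrow> complex) \<Rightarrow> ('a \<Rightarrow> real) \<Rightarrow> 'a set \<Rightarrow> ereal" where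
  "infsup a nrm S = (INF u\<in>S - {0}. SUP v\<in>S - {0}. ereal (cmod (a u v) / (nrm u * nrm v)))"

end

theory Submission imports Defs begin

locale cvsp = vector_space sc for sc :: "complex \<Rightarrow> 'a::ab_group_add \<Rightarrow> 'a"
begin

lemma lin_sum:
  fixes f :: "'a \<Rightarrow> 'a"
  assumes add: "\<And>x y. x \<in> span B \<Longrightarrow> y \<in> span B \<Longrightarrow> f (x + y) = f x + f y"
    and fin: "finite A" and mem: "\<And>a. a \<in> A \<Longrightarrow> g a \<in> span B"
  shows "f (\<Sum>a\<in>A. g a) = (\<Sum>a\<in>A. f (g a))"
  using fin mem
proof (induction A rule: finite_induct)
  case empty
  have "f 0 = f 0 + f 0" using add[of 0 0] by (simp add: span_zero)
  then show ?case using add_cancel_right_right[of "f 0" "f 0"] by simp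
next
  case (insert a A)
  have "f (g a + (\<Sum>a\<in>A. g a)) = f (g a) + f (\<Sum>a\<in>A. g a)"
    using insert by (intro add) (auto intro!: span_sum)
  then show ?case using insert by simp
qed

lemma inj_surj:
  assumes fin: "finite B" and ind: "independent B"
    and into: "\<And>x. x \<in> span B \<Longrightarrow> f x \<in> span B"
    and add: "\<And>x y. x \<in> span B \<Longrightarrow> y \<in> span B \<Longrightarrow> f (x + y) = f x + f y"
    and hom: "\<And>c x. x \<in> span B \<Longrightarrow> f (sc c x) = sc c (f x)"
    and inj0: "\<And>x. x \<in> span B \<Longrightarrow> f x = 0 \<Longrightarrow> x = 0"
    and y: "y \<in> span B"
  shows "\<exists>x\<in>span B. f x = y"
proof -
  have injB: "inj_on f B"
  proof (rule inj_onI)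
    fix x y assume xy: "x \<in> B" "y \<in> B" "f x = f y"
    then have s: "x \<in> span B" "y \<in> span B" by (auto intro: span_base)
    have "f (x - y) + f y = f x" using add[of "x - y" y] s by (simp add: span_diff)
    then have "f (x - y) = 0" using xy by simp
    then have "x - y = 0" using inj0[of "x - y"] s span_diff by blast
    then show "x = y" by simp
  qed
  have indf: "independent (f ` B)"
  proof (rule independent_if_scalars_zero)
    show "finite (f ` B)" using fin by simp
    fix g z assume sum0: "(\<Sum>x\<in>f ` B. sc (g x) x) = 0" and z: "z \<in> f ` B"
    have "(\<Sum>x\<in>f ` B. sc (g x) x) = (\<Sum>b\<in>B. sc (g (f b)) (f b))"
      by (simp add: sum.reindex[OF injB])
    also have "\<dots> = (\<Sum>b\<in>B. f (sc (g (f b)) b))"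
      using hom span_base by (intro sum.cong) auto
    also have "\<dots> = f (\<Sum>b\<in>B. sc (g (f b)) b)"
    proof (rule lin_sum[symmetric])
      show "\<And>x y. x \<in> span B \<Longrightarrow> y \<in> span B \<Longrightarrow> f (x + y) = f x + f y" by (rule add)
      show "finite B" by (rule fin)
      show "\<And>a. a \<in> B \<Longrightarrow> sc (g (f a)) a \<in> span B" by (intro span_scale span_base)
    qed
    finally have "f (\<Sum>b\<in>B. sc (g (f b)) b) = 0" using sum0 by simp
    moreover have "(\<Sum>b\<in>B. sc (g (f b)) b) \<in> span B"
      by (intro span_sum span_scale span_base)
    ultimately have "(\<Sum>b\<in>B. sc (g (f b)) b) = 0"
      using inj0 by blast
    then have "\<forall>b\<in>B. g (f b) = 0" using independentD[OF ind fin subset_refl, of "\<lambda>b. g (f b)"] by blast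
    then show "g z = 0" using z by auto
  qed
  show ?thesis
  proof (cases "y \<in> span (f ` B)")
    case True
    then obtain u where u: "y = (\<Sum>z\<in>f ` B. sc (u z) z)"
      using span_finite[of "f ` B"] fin by auto
    have "y = (\<Sum>b\<in>B. sc (u (f b)) (f b))" using u by (simp add: sum.reindex[OF injB])
    also have "\<dots> = (\<Sum>b\<in>B. f (sc (u (f b)) b))"
      using hom span_base by (intro sum.cong) auto
    also have "\<dots> = f (\<Sum>b\<in>B. sc (u (f b)) b)"
    proof (rule lin_sum[symmetric])
      show "\<And>x y. x \<in> span B \<Longrightarrow> y \<in> span B \<Longrightarrow> f (x + y) = f x + f y" by (rule add)
      show "finite B" by (rule fin)
      show "\<And>a. a \<in> B \<Longrightarrow> sc (u (f a)) a \<in> span B" by (intro span_scale span_base)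
    qed
    finally have yf: "y = f (\<Sum>b\<in>B. sc (u (f b)) b)" .
    have "(\<Sum>b\<in>B. sc (u (f b)) b) \<in> span B"
      by (intro span_sum span_scale span_base)
    then show ?thesis using yf by blast
  next
    case False
    have "independent (insert y (f ` B))" using independent_insertI[OF False indf] .
    moreover have "insert y (f ` B) \<subseteq> span B" using y into span_base by blast
    ultimately have "card (insert y (f ` B)) \<le> card B"
      using independent_span_bound[OF fin] by blast
    moreover have "card (insert y (f ` B)) = card B + 1"
    proof -
      have "y \<notin> f ` B" using False span_base[of y "f ` B"] by blast
      then show ?thesis using card_image[OF injB] fin by simp
    qed
    ultimately show ?thesis by simp
  qed
qed


lemma neg_sc: "- x = sc (-1) x"
  by (simp add: scale_minus_left)

lemma csubsp_diff: assumes "csubsp sc S" "x \<in> S" "y \<in> S" shows "x - y \<in> S"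
proof -
  have e: "x - y = x + sc (-1) y" by (simp add: neg_sc[symmetric])
  have "x + sc (-1) y \<in> S" using assms unfolding csubsp_def by blast
  then show ?thesis unfolding e .
qed

lemma csubsp_neg: assumes "csubsp sc S" "y \<in> S" shows "- y \<in> S"
proof -
  have e: "- y = sc (-1) y" by (simp add: neg_sc[symmetric])
  have "sc (-1) y \<in> S" using assms unfolding csubsp_def by blast
  then show ?thesis unfolding e .
qed

lemma csubsp_sum: assumes "csubsp sc S" "finite A" "\<And>a. a \<in> A \<Longrightarrow> g a \<in> S" shows "sum g A \<in> S"
  using assms(2,3)
proof (induction A rule: finite_induct)
  case empty then show ?case using assms(1) unfolding csubsp_def by simp
next
  case (insert a A) then show ?case using assms(1) unfolding csubsp_def by simp
qed

lemma csubsp_subspace: "csubsp sc S \<Longrightarrow> subspace S"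
  unfolding csubsp_def subspace_def by auto

lemma span_sub: "csubsp sc S \<Longrightarrow> B \<subseteq> S \<Longrightarrow> span B \<subseteq> S"
  by (rule span_minimal) (auto intro: csubsp_subspace)

lemma cinD:
  assumes "cinner_on sc ip S"
  shows "\<And>x y. x \<in> S \<Longrightarrow> y \<in> S \<Longrightarrow> ip y x = cnj (ip x y)"
    and "\<And>x y z. x \<in> S \<Longrightarrow> y \<in> S \<Longrightarrow> z \<in> S \<Longrightarrow> ip (x + y) z = ip x z + ip y z"
    and "\<And>c x y. x \<in> S \<Longrightarrow> y \<in> S \<Longrightarrow> ip (sc c x) y = c * ip x y"
    and "\<And>x. x \<in> S \<Longrightarrow> 0 \<le> Re (ip x x)"
    and "\<And>x. x \<in> S \<Longrightarrow> ip x x = 0 \<Longrightarrow> x = 0"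
proof -
  have h0: "(\<forall>x\<in>S. \<forall>y\<in>S. \<forall>z\<in>S. ip (x + y) z = ip x z + ip y z) \<and>
     (\<forall>c. \<forall>x\<in>S. \<forall>y\<in>S. ip (sc c x) y = c * ip x y) \<and>
     (\<forall>x\<in>S. \<forall>y\<in>S. ip y x = cnj (ip x y)) \<and>
     (\<forall>x\<in>S. 0 \<le> Re (ip x x)) \<and>
     (\<forall>x\<in>S. ip x x = 0 \<longrightarrow> x = 0)"
    using assms unfolding cinner_on_def .
  note h = conjunct1[OF h0] conjunct1[OF conjunct2[OF h0]] conjunct1[OF conjunct2[OF conjunct2[OF h0]]]
    conjunct1[OF conjunct2[OF conjunct2[OF conjunct2[OF h0]]]] conjunct2[OF conjunct2[OF conjunct2[OF conjunct2[OF h0]]]]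
  show "\<And>x y. x \<in> S \<Longrightarrow> y \<in> S \<Longrightarrow> ip y x = cnj (ip x y)" using h(3) by blast
  show "\<And>x y z. x \<in> S \<Longrightarrow> y \<in> S \<Longrightarrow> z \<in> S \<Longrightarrow> ip (x + y) z = ip x z + ip y z" using h(1) by blast
  show "\<And>c x y. x \<in> S \<Longrightarrow> y \<in> S \<Longrightarrow> ip (sc c x) y = c * ip x y" using h(2) by blast
  show "\<And>x. x \<in> S \<Longrightarrow> 0 \<le> Re (ip x x)" using h(4) by blast
  show "\<And>x. x \<in> S \<Longrightarrow> ip x x = 0 \<Longrightarrow> x = 0" using h(5) by blast
qed

lemma sesq_of_inner:
  assumes "cinner_on sc ip S" "csubsp sc S"
  shows "sesq_on sc S ip"
proof -
  have c: "\<And>x y. x \<in> S \<Longrightarrow> y \<in> S \<Longrightarrow> ip y x = cnj (ip x y)"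
    and a: "\<And>x y z. x \<in> S \<Longrightarrow> y \<in> S \<Longrightarrow> z \<in> S \<Longrightarrow> ip (x + y) z = ip x z + ip y z"
    and s: "\<And>c x y. x \<in> S \<Longrightarrow> y \<in> S \<Longrightarrow> ip (sc c x) y = c * ip x y"
    using assms(1) cinD by blast+
  have cl: "\<And>x y. x \<in> S \<Longrightarrow> y \<in> S \<Longrightarrow> x + y \<in> S" "\<And>c x. x \<in> S \<Longrightarrow> sc c x \<in> S"
    using assms(2) unfolding csubsp_def by blast+
  show ?thesis unfolding sesq_on_def
  proof (intro conjI ballI allI)
    fix x y z assume "x \<in> S" "y \<in> S" "z \<in> S"
    then show "ip (x + y) z = ip x z + ip y z" by (rule a)
    have "ip x (y + z) = cnj (ip (y + z) x)" using c[OF cl(1)[OF \<open>y \<in> S\<close> \<open>z \<in> S\<close>] \<open>x \<in> S\<close>] .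
    also have "\<dots> = cnj (ip y x) + cnj (ip z x)" using a[of y z x] \<open>x \<in> S\<close> \<open>y \<in> S\<close> \<open>z \<in> S\<close> by simp
    also have "\<dots> = ip x y + ip x z" using c[of y x] c[of z x] \<open>x \<in> S\<close> \<open>y \<in> S\<close> \<open>z \<in> S\<close> by simp
    finally show "ip x (y + z) = ip x y + ip x z" .
  next
    fix c x y assume "x \<in> S" "y \<in> S"
    then show "ip (sc c x) y = c * ip x y" by (rule s)
    have "ip x (sc c y) = cnj (ip (sc c y) x)" using c[OF cl(2)[OF \<open>y \<in> S\<close>] \<open>x \<in> S\<close>] .
    also have "\<dots> = cnj c * cnj (ip y x)" using s[of y x c] \<open>x \<in> S\<close> \<open>y \<in> S\<close> by simp
    also have "\<dots> = cnj c * ip x y" using c[of y x] \<open>x \<in> S\<close> \<open>y \<in> S\<close> by simp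
    finally show "ip x (sc c y) = cnj c * ip x y" .
  qed
qed

context
  fixes S s
  assumes sq: "sesq_on sc S s" and cs: "csubsp sc S"
begin

lemma sq_addl: "x \<in> S \<Longrightarrow> y \<in> S \<Longrightarrow> z \<in> S \<Longrightarrow> s (x + y) z = s x z + s y z"
  using sq unfolding sesq_on_def by blast
lemma sq_addr: "x \<in> S \<Longrightarrow> y \<in> S \<Longrightarrow> z \<in> S \<Longrightarrow> s x (y + z) = s x y + s x z"
  using sq unfolding sesq_on_def by blast
lemma sq_scl: "x \<in> S \<Longrightarrow> y \<in> S \<Longrightarrow> s (sc c x) y = c * s x y"
  using sq unfolding sesq_on_def by blast
lemma sq_scr: "x \<in> S \<Longrightarrow> y \<in> S \<Longrightarrow> s x (sc c y) = cnj c * s x y"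
  using sq unfolding sesq_on_def by blast
lemma sq_zl: "y \<in> S \<Longrightarrow> s 0 y = 0"
  using sq_scl[of 0 y 0] cs unfolding csubsp_def by simp
lemma sq_zr: "x \<in> S \<Longrightarrow> s x 0 = 0"
  using sq_scr[of x 0 0] cs unfolding csubsp_def by simp
lemma sq_diffl: assumes x: "x \<in> S" and y: "y \<in> S" and z: "z \<in> S" shows "s (x - y) z = s x z - s y z"
proof -
  have e: "x - y = x + sc (-1) y" by (simp add: neg_sc[symmetric])
  have m: "sc (-1) y \<in> S" using cs y unfolding csubsp_def by blast
  have "s (x - y) z = s (x + sc (-1) y) z" by (simp only: e)
  also have "\<dots> = s x z + (-1) * s y z" by (simp only: sq_addl[OF x m z] sq_scl[OF y z])
  finally show ?thesis by simp
qed
lemma sq_diffr: assumes x: "x \<in> S" and y: "y \<in> S" and z: "z \<in> S" shows "s x (y - z) = s x y - s x z"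
proof -
  have e: "y - z = y + sc (-1) z" by (simp add: neg_sc[symmetric])
  have m: "sc (-1) z \<in> S" using cs z unfolding csubsp_def by blast
  have "s x (y - z) = s x (y + sc (-1) z)" by (simp only: e)
  also have "\<dots> = s x y + cnj (-1) * s x z" by (simp only: sq_addr[OF x y m] sq_scr[OF x z])
  finally show ?thesis by simp
qed

lemma sq_ext:
  assumes t: "sesq_on sc S t" and BS: "span B \<subseteq> S" and x: "x \<in> S" and y: "y \<in> S"
    and h: "\<And>b. b \<in> B \<Longrightarrow> s b x = t b y"
  shows "\<And>v. v \<in> span B \<Longrightarrow> s v x = t v y"
proof -
  have tl: "\<And>x y z. x \<in> S \<Longrightarrow> y \<in> S \<Longrightarrow> z \<in> S \<Longrightarrow> t (x + y) z = t x z + t y z"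
    "\<And>c x y. x \<in> S \<Longrightarrow> y \<in> S \<Longrightarrow> t (sc c x) y = c * t x y"
    using t unfolding sesq_on_def by blast+
  have tz: "t 0 y = 0" using tl(2)[of 0 y 0] cs y unfolding csubsp_def by simp
  have "subspace {v. v \<in> S \<and> s v x = t v y}"
  proof (rule subspaceI)
    show "0 \<in> {v. v \<in> S \<and> s v x = t v y}" using cs sq_zl[OF x] tz unfolding csubsp_def by simp
  next
    fix u v assume "u \<in> {v. v \<in> S \<and> s v x = t v y}" "v \<in> {v. v \<in> S \<and> s v x = t v y}"
    then show "u + v \<in> {v. v \<in> S \<and> s v x = t v y}"
      using cs sq_addl tl x y unfolding csubsp_def by auto
  next
    fix c u assume "u \<in> {v. v \<in> S \<and> s v x = t v y}"
    then show "sc c u \<in> {v. v \<in> S \<and> s v x = t v y}"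
      using cs sq_scl tl x y unfolding csubsp_def by auto
  qed
  moreover have "B \<subseteq> {v. v \<in> S \<and> s v x = t v y}" using h BS span_superset by blast
  ultimately have "span B \<subseteq> {v. v \<in> S \<and> s v x = t v y}" by (rule span_minimal[rotated])
  then show "\<And>v. v \<in> span B \<Longrightarrow> s v x = t v y" by blast
qed

lemma riesz_basis:
  assumes fin: "finite B" and ind: "independent B" and sub: "span B \<subseteq> S"
    and nd: "\<And>x. x \<in> span B \<Longrightarrow> (\<forall>b\<in>B. s b x = 0) \<Longrightarrow> x = 0"
  shows "\<exists>x\<in>span B. \<forall>b\<in>B. s b x = \<phi> b"
proof -
  define f where "f x = (\<Sum>b\<in>B. sc (cnj (s b x)) b)" for x
  have BS: "\<And>b. b \<in> B \<Longrightarrow> b \<in> S" using sub span_base by blast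
  have into: "f x \<in> span B" for x unfolding f_def by (intro span_sum span_scale span_base)
  have add: "f (x + y) = f x + f y" if "x \<in> span B" "y \<in> span B" for x y
  proof -
    have xyS: "x \<in> S" "y \<in> S" using that sub by auto
    have "f (x + y) = (\<Sum>b\<in>B. sc (cnj (s b x)) b + sc (cnj (s b y)) b)"
      unfolding f_def
    proof (rule sum.cong)
      fix b assume "b \<in> B"
      then have "s b (x + y) = s b x + s b y" using sq_addr BS xyS by blast
      then show "sc (cnj (s b (x + y))) b = sc (cnj (s b x)) b + sc (cnj (s b y)) b"
        by (simp add: scale_left_distrib)
    qed simp
    then show ?thesis unfolding f_def by (simp add: sum.distrib)
  qed
  have hom: "f (sc c x) = sc c (f x)" if "x \<in> span B" for c x
  proof -
    have xS: "x \<in> S" using that sub by auto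
    have "f (sc c x) = (\<Sum>b\<in>B. sc c (sc (cnj (s b x)) b))"
      unfolding f_def
    proof (rule sum.cong)
      fix b assume "b \<in> B"
      then have "s b (sc c x) = cnj c * s b x" using sq_scr BS xS by blast
      then show "sc (cnj (s b (sc c x))) b = sc c (sc (cnj (s b x)) b)"
        by (simp add: scale_scale)
    qed simp
    then show ?thesis unfolding f_def by (simp add: scale_sum_right)
  qed
  have inj0: "x = 0" if "x \<in> span B" "f x = 0" for x
  proof -
    have "(\<Sum>b\<in>B. sc (cnj (s b x)) b) = 0" using that(2) unfolding f_def .
    then have "\<forall>b\<in>B. cnj (s b x) = 0"
      using independentD[OF ind fin subset_refl, of "\<lambda>b. cnj (s b x)"] by blast
    then show ?thesis using nd[OF that(1)] by simp
  qed
  have ym: "(\<Sum>b\<in>B. sc (cnj (\<phi> b)) b) \<in> span B" by (intro span_sum span_scale span_base)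
  obtain x where x: "x \<in> span B" "f x = (\<Sum>b\<in>B. sc (cnj (\<phi> b)) b)"
    using inj_surj[OF fin ind into add hom inj0 ym] by blast
  then have "(\<Sum>b\<in>B. sc (cnj (s b x) - cnj (\<phi> b)) b) = 0"
    unfolding f_def by (simp add: scale_left_diff_distrib sum_subtractf)
  then have "\<forall>b\<in>B. cnj (s b x) - cnj (\<phi> b) = 0"
    using independentD[OF ind fin subset_refl, of "\<lambda>b. cnj (s b x) - cnj (\<phi> b)"] by blast
  then have "\<forall>b\<in>B. s b x = \<phi> b" by simp
  then show ?thesis using x(1) by blast
qed

end


context
  fixes ip S
  assumes ci: "cinner_on sc ip S" and cs: "csubsp sc S"
begin

lemma sqi: "sesq_on sc S ip" using sesq_of_inner[OF ci cs] .

lemma ip_Re_nonneg: "x \<in> S \<Longrightarrow> 0 \<le> Re (ip x x)" using cinD(4)[OF ci] by blast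

lemma ip_self_real: assumes x: "x \<in> S" shows "ip x x = complex_of_real ((ip_norm ip x)\<^sup>2)"
proof -
  have "ip x x = cnj (ip x x)" using cinD(1)[OF ci x x] .
  then have "Im (ip x x) = Im (cnj (ip x x))" by (rule arg_cong)
  then have "Im (ip x x) = 0" by simp
  moreover have "(ip_norm ip x)\<^sup>2 = Re (ip x x)" unfolding ip_norm_def using ip_Re_nonneg[OF x] by simp
  ultimately show ?thesis by (simp add: complex_eq_iff)
qed

lemma ipn_sq: "x \<in> S \<Longrightarrow> (ip_norm ip x)\<^sup>2 = Re (ip x x)"
  unfolding ip_norm_def using ip_Re_nonneg by simp

lemma ipn_nonneg: "x \<in> S \<Longrightarrow> 0 \<le> ip_norm ip x"
  unfolding ip_norm_def using ip_Re_nonneg by simp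

lemma zeroS: "0 \<in> S" using cs unfolding csubsp_def by blast

lemma ipn_zero: "ip_norm ip 0 = 0"
  unfolding ip_norm_def using sq_zl[OF sqi cs zeroS] by simp

lemma ipn_eq0: assumes x: "x \<in> S" and n: "ip_norm ip x = 0" shows "x = 0"
proof -
  have "ip x x = 0" using ip_self_real[OF x] n by simp
  then show ?thesis using cinD(5)[OF ci x] by blast
qed

lemma ipn_pos: "x \<in> S \<Longrightarrow> x \<noteq> 0 \<Longrightarrow> 0 < ip_norm ip x"
  using ipn_eq0 ipn_nonneg by force

lemma cauchy_schwarz:
  assumes x: "x \<in> S" and y: "y \<in> S"
  shows "cmod (ip x y) \<le> ip_norm ip x * ip_norm ip y"
proof (cases "y = 0")
  case True
  have a: "ip x y = 0" unfolding True by (rule sq_zr[OF sqi cs x])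
  have b: "ip_norm ip y = 0" unfolding True by (rule ipn_zero)
  show ?thesis unfolding a b by simp
next
  case False
  define r where "r = (ip_norm ip y)\<^sup>2"
  have rpos: "0 < r" unfolding r_def using ipn_pos[OF y False] by simp
  have yy: "ip y y = complex_of_real r" unfolding r_def by (rule ip_self_real[OF y])
  define p where "p = ip x y"
  define t where "t = p / complex_of_real r"
  have yx: "ip y x = cnj p" unfolding p_def using cinD(1)[OF ci x y] .
  have scS: "sc t y \<in> S" using cs y unfolding csubsp_def by blast
  define z where "z = x - sc t y"
  have zS: "z \<in> S" unfolding z_def by (rule csubsp_diff[OF cs x scS])
  have "ip y z = ip y x - ip y (sc t y)" unfolding z_def by (rule sq_diffr[OF sqi cs y x scS])
  also have "\<dots> = cnj p - cnj t * complex_of_real r" using yx sq_scr[OF sqi cs y y, of t] yy by simp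
  also have "\<dots> = 0" unfolding t_def using rpos by simp
  finally have yz: "ip y z = 0" .
  have "ip z z = ip x z - ip (sc t y) z" by (subst (1) z_def) (rule sq_diffl[OF sqi cs x scS zS])
  also have "\<dots> = ip x z" using sq_scl[OF sqi cs y zS, of t] yz by simp
  also have "\<dots> = ip x x - ip x (sc t y)" unfolding z_def by (rule sq_diffr[OF sqi cs x x scS])
  also have "\<dots> = ip x x - cnj t * p" using sq_scr[OF sqi cs x y, of t] unfolding p_def by simp
  finally have zz: "ip z z = ip x x - cnj t * p" .
  have "cnj t * p = (p * cnj p) / complex_of_real r"
    unfolding t_def by simp
  also have "\<dots> = complex_of_real ((cmod p)\<^sup>2 / r)"
    unfolding complex_norm_square[symmetric] by simp
  finally have ctp: "cnj t * p = complex_of_real ((cmod p)\<^sup>2 / r)" .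
  then have "Re (ip z z) = Re (ip x x) - (cmod p)\<^sup>2 / r" using zz ctp by simp
  then have "(cmod p)\<^sup>2 / r \<le> Re (ip x x)" using ip_Re_nonneg[OF zS] by simp
  then have "(cmod p)\<^sup>2 \<le> Re (ip x x) * r" using rpos by (simp add: divide_le_eq)
  also have "\<dots> = (ip_norm ip x * ip_norm ip y)\<^sup>2" unfolding r_def using ipn_sq[OF x] by (simp add: power_mult_distrib)
  finally have "(cmod p)\<^sup>2 \<le> (ip_norm ip x * ip_norm ip y)\<^sup>2" .
  then have "cmod p \<le> ip_norm ip x * ip_norm ip y"
    by (rule power2_le_imp_le) (simp add: ipn_nonneg[OF x] ipn_nonneg[OF y])
  then show ?thesis by (simp only: p_def)
qed

lemma ipn_tri: assumes x: "x \<in> S" and y: "y \<in> S"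
  shows "ip_norm ip (x + y) \<le> ip_norm ip x + ip_norm ip y"
proof -
  have xyS: "x + y \<in> S" using cs x y unfolding csubsp_def by blast
  have "ip (x + y) (x + y) = ip x x + ip x y + (ip y x + ip y y)"
    using sq_addl[OF sqi cs x y xyS] sq_addr[OF sqi cs x x y] sq_addr[OF sqi cs y x y] by simp
  moreover have "ip y x = cnj (ip x y)" using cinD(1)[OF ci x y] .
  ultimately have "Re (ip (x + y) (x + y)) = Re (ip x x) + 2 * Re (ip x y) + Re (ip y y)" by simp
  also have "\<dots> \<le> Re (ip x x) + 2 * (ip_norm ip x * ip_norm ip y) + Re (ip y y)"
    using complex_Re_le_cmod[of "ip x y"] cauchy_schwarz[OF x y] by simp
  also have "\<dots> = (ip_norm ip x + ip_norm ip y)\<^sup>2"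
    using ipn_sq[OF x] ipn_sq[OF y] by (simp add: power2_sum)
  finally have "(ip_norm ip (x + y))\<^sup>2 \<le> (ip_norm ip x + ip_norm ip y)\<^sup>2" using ipn_sq[OF xyS] by simp
  then show ?thesis
    by (rule power2_le_imp_le) (simp add: ipn_nonneg[OF x] ipn_nonneg[OF y])
qed

lemma ipn_neg: assumes y: "y \<in> S" shows "ip_norm ip (- y) = ip_norm ip y"
proof -
  have e: "- y = sc (-1) y" by (rule neg_sc)
  have m: "sc (-1) y \<in> S" using cs y unfolding csubsp_def by blast
  have h: "ip (sc (-1) y) (sc (-1) y) = ip y y"
    by (simp only: sq_scl[OF sqi cs y m] sq_scr[OF sqi cs y y], simp)
  show ?thesis unfolding ip_norm_def e h ..
qed

lemma ipn_tri_diff: assumes x: "x \<in> S" and y: "y \<in> S"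
  shows "ip_norm ip (x - y) \<le> ip_norm ip x + ip_norm ip y"
  using ipn_tri[OF x csubsp_neg[OF cs y]] ipn_neg[OF y] by simp

end

end

theorem corollary4p9:
  fixes sc :: "complex \<Rightarrow> 'a::ab_group_add \<Rightarrow> 'a"
    and ip0 ipH :: "'a \<Rightarrow> 'a \<Rightarrow> complex"
    and Hs :: "'a set"
    and D :: "'a \<Rightarrow> 'a"
    and b :: "'a \<Rightarrow> 'a \<Rightarrow> complex"
    and mu_inv eps :: "nat \<Rightarrow> 'a \<Rightarrow> 'a"
    and a :: "nat \<Rightarrow> 'a \<Rightarrow> 'a \<Rightarrow> complex"
    and CG1 CG2 :: "nat \<Rightarrow> real"
    and l :: nat and Cqo :: real
    and HN :: "nat \<Rightarrow> 'a set"
  assumes cvs: "cvs sc"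
    and H0_hilbert: "hilbert_on sc ip0 UNIV"
    and H_hilbert: "hilbert_on sc ipH Hs"
    and norm_le: "\<forall>v\<in>Hs. ip_norm ip0 v \<le> ip_norm ipH v"
    and D_lin: "clinear_on sc Hs D"
    and D_bd: "\<forall>u\<in>Hs. ip_norm ip0 (D u) \<le> ip_norm ipH u"
    and b_sesq: "sesq_on sc Hs b"
    and b_cont: "\<exists>Cb. \<forall>u\<in>Hs. \<forall>v\<in>Hs. cmod (b u v) \<le> Cb * ip_norm ipH u * ip_norm ipH v"
    and mu_lin: "\<forall>k\<in>{1,2}. clinear_on sc UNIV (mu_inv k) \<and>
                   (\<exists>C. \<forall>x. ip_norm ip0 (mu_inv k x) \<le> C * ip_norm ip0 x)"
    and eps_lin: "\<forall>k\<in>{1,2}. clinear_on sc UNIV (eps k) \<and>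
                   (\<exists>C. \<forall>x. ip_norm ip0 (eps k x) \<le> C * ip_norm ip0 x)"
    and a_def: "\<forall>k u v. a k u v = ip0 (mu_inv k (D u)) (D v) + b u v - ip0 (eps k u) v"
    and garding: "\<forall>k\<in>{1,2}. CG1 k > 0 \<and> CG2 k > 0 \<and>
                   (\<forall>v\<in>Hs. cmod (a k v v + complex_of_real (CG2 k * (ip_norm ip0 v)\<^sup>2))
                            \<ge> CG1 k * (ip_norm ipH v)\<^sup>2)"
    and l: "l \<in> {1, 2}"
    and solvable: "\<forall>f. \<exists>!u. u \<in> Hs \<and> (\<forall>v\<in>Hs. a l u v = ip0 f v)"
    and sol_bounded: "\<exists>C. \<forall>f u. u \<in> Hs \<and> (\<forall>v\<in>Hs. a l u v = ip0 f v) \<longrightarrow>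
                        ip_norm ipH u \<le> C * ip_norm ip0 f"
    and Cqo: "0 < Cqo"
    and HN_sub: "\<forall>N. HN N \<subseteq> Hs \<and> fin_dim_subsp sc (HN N)"
    and galerkin: "\<forall>N f. (\<exists>!uN. uN \<in> HN N \<and> (\<forall>vN\<in>HN N. a l uN vN = ip0 f vN)) \<and>
                   (\<forall>uN u. uN \<in> HN N \<and> (\<forall>vN\<in>HN N. a l uN vN = ip0 f vN) \<and>
                          u \<in> Hs \<and> (\<forall>v\<in>Hs. a l u v = ip0 f v) \<longrightarrow>
                          ip_norm ipH (u - uN) \<le> Cqo * ip_norm ipH (u - oproj ipH (HN N) u))"
  shows "\<forall>N. infsup (a l) (ip_norm ipH) (HN N) \<ge>
           ereal (1 / (inverse (CG1 l) *
             (1 + CG2 l * (1 + Cqo) * solmap_norm ip0 ipH Hs (a l))))"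
proof (intro allI)
  fix N
  interpret cvsp sc
    using cvs unfolding cvs_def by unfold_locales auto
  have ci0: "cinner_on sc ip0 UNIV" and cs0: "csubsp sc UNIV"
    using H0_hilbert unfolding hilbert_on_def by auto
  have ciH: "cinner_on sc ipH Hs" and csH: "csubsp sc Hs"
    using H_hilbert unfolding hilbert_on_def by auto
  have sq0: "sesq_on sc UNIV ip0" by (rule sqi[OF ci0 cs0])
  have sqH: "sesq_on sc Hs ipH" by (rule sqi[OF ciH csH])
  have mul: "clinear_on sc UNIV (mu_inv l)" and epsl: "clinear_on sc UNIV (eps l)"
    using mu_lin eps_lin l by auto
  have CG1: "CG1 l > 0" and CG2: "CG2 l > 0"
    and gard: "\<And>v. v \<in> Hs \<Longrightarrow> cmod (a l v v + complex_of_real (CG2 l * (ip_norm ip0 v)\<^sup>2)) \<ge> CG1 l * (ip_norm ipH v)\<^sup>2"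
    using garding l by auto
  have Dadd: "\<And>x y. x \<in> Hs \<Longrightarrow> y \<in> Hs \<Longrightarrow> D (x + y) = D x + D y"
    and Dsc: "\<And>c x. x \<in> Hs \<Longrightarrow> D (sc c x) = sc c (D x)"
    using D_lin unfolding clinear_on_def by auto
  have muadd: "\<And>x y. mu_inv l (x + y) = mu_inv l x + mu_inv l y"
    and musc: "\<And>c x. mu_inv l (sc c x) = sc c (mu_inv l x)"
    using mul unfolding clinear_on_def by auto
  have epsadd: "\<And>x y. eps l (x + y) = eps l x + eps l y"
    and epssc: "\<And>c x. eps l (sc c x) = sc c (eps l x)"
    using epsl unfolding clinear_on_def by auto
  have asq: "sesq_on sc Hs (a l)"
    unfolding sesq_on_def
  proof (intro conjI ballI allI)
    fix x y z assume xyz: "x \<in> Hs" "y \<in> Hs" "z \<in> Hs"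
    show "a l (x + y) z = a l x z + a l y z"
      using xyz by (simp add: a_def Dadd muadd epsadd sq_addl[OF sq0 cs0] sq_addl[OF b_sesq csH])
    show "a l x (y + z) = a l x y + a l x z"
      using xyz by (simp add: a_def Dadd sq_addr[OF sq0 cs0] sq_addr[OF b_sesq csH])
  next
    fix c x y assume xy: "x \<in> Hs" "y \<in> Hs"
    show "a l (sc c x) y = c * a l x y"
      using xy by (simp add: a_def Dsc musc epssc sq_scl[OF sq0 cs0] sq_scl[OF b_sesq csH] algebra_simps)
    show "a l x (sc c y) = cnj c * a l x y"
      using xy by (simp add: a_def Dsc sq_scr[OF sq0 cs0] sq_scr[OF b_sesq csH] algebra_simps)
  qed
  obtain Bf where finBf: "finite Bf" and Veq: "HN N = range (\<lambda>c. \<Sum>b\<in>Bf. sc (c b) b)"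
    using HN_sub unfolding fin_dim_subsp_def by blast
  have Vspan: "HN N = span Bf" using Veq span_finite[OF finBf] by simp
  obtain B0 where B0: "B0 \<subseteq> Bf" "independent B0" "Bf \<subseteq> span B0"
    using maximal_independent_subset[of Bf] by blast
  have finB0: "finite B0" using B0(1) finBf finite_subset by blast
  have "span B0 \<subseteq> span Bf" using B0(1) by (rule span_mono)
  moreover have "span Bf \<subseteq> span B0" using B0(3) by (rule span_minimal[OF _ subspace_span])
  ultimately have V: "HN N = span B0" using Vspan by blast
  have subH: "span B0 \<subseteq> Hs" using HN_sub V by blast
  have B0H: "\<And>b. b \<in> B0 \<Longrightarrow> b \<in> Hs" using subH span_base by blast
  have zeroH: "0 \<in> Hs" using csH unfolding csubsp_def by blast
  have ipH_nd: "x = 0" if "x \<in> span B0" "\<forall>b\<in>B0. ipH b x = 0" for x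
  proof -
    have xH: "x \<in> Hs" using that subH by blast
    have "\<And>v. v \<in> span B0 \<Longrightarrow> ipH v x = ipH v 0"
      by (rule sq_ext[OF sqH csH sqH subH xH zeroH]) (use that sq_zr[OF sqH csH] B0H in auto)
    then have "ipH x x = ipH x 0" using that by blast
    then have "ipH x x = 0" using sq_zr[OF sqH csH xH] by simp
    then show ?thesis using cinD(5)[OF ciH xH] by blast
  qed
  have proj: "ip_norm ipH (y - oproj ipH (HN N) y) \<le> ip_norm ipH y" if yH: "y \<in> Hs" for y
  proof -
    obtain p where p: "p \<in> span B0" "\<forall>b\<in>B0. ipH b p = ipH b y"
      using riesz_basis[OF sqH csH finB0 B0(2) subH ipH_nd, of "\<lambda>b. ipH b y"] by blast
    have pH: "p \<in> Hs" using p(1) subH by blast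
    have pv: "\<And>w. w \<in> span B0 \<Longrightarrow> ipH w p = ipH w y"
      by (rule sq_ext[OF sqH csH sqH subH pH yH]) (use p in auto)
    have ypH: "y - p \<in> Hs" by (rule csubsp_diff[OF csH yH pH])
    have orth: "ipH (y - p) w = 0" if w: "w \<in> span B0" for w
    proof -
      have wH: "w \<in> Hs" using w subH by blast
      have "ipH (y - p) w = cnj (ipH w (y - p))" using cinD(1)[OF ciH wH ypH] .
      also have "\<dots> = cnj (ipH w y - ipH w p)" using sq_diffr[OF sqH csH wH yH pH] by simp
      also have "\<dots> = 0" using pv[OF w] by simp
      finally show ?thesis .
    qed
    have oeq: "oproj ipH (HN N) y = p"
      unfolding oproj_def V
    proof (rule the_equality)
      show "p \<in> span B0 \<and> (\<forall>w\<in>span B0. ipH (y - p) w = 0)" using p(1) orth by blast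
    next
      fix q assume q: "q \<in> span B0 \<and> (\<forall>w\<in>span B0. ipH (y - q) w = 0)"
      have qH: "q \<in> Hs" using q subH by blast
      have pq: "p - q \<in> span B0" using q p(1) span_diff by blast
      have pqH: "p - q \<in> Hs" using pq subH by blast
      have yqH: "y - q \<in> Hs" by (rule csubsp_diff[OF csH yH qH])
      have e: "p - q = (y - q) - (y - p)" by simp
      have "ipH (p - q) (p - q) = ipH ((y - q) - (y - p)) (p - q)" by (simp only: e[symmetric])
      also have "\<dots> = ipH (y - q) (p - q) - ipH (y - p) (p - q)" by (rule sq_diffl[OF sqH csH yqH ypH pqH])
      also have "\<dots> = 0" using q pq orth[OF pq] by simp
      finally have "ipH (p - q) (p - q) = 0" .
      then have "p - q = 0" using cinD(5)[OF ciH pqH] by blast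
      then show "q = p" by simp
    qed
    define q where "q = y - p"
    have qH: "q \<in> Hs" unfolding q_def by (rule ypH)
    have yq: "y = q + p" unfolding q_def by simp
    have a1: "ipH q p = 0" unfolding q_def using orth[OF p(1)] .
    have "ipH p q = cnj (ipH q p)" using cinD(1)[OF ciH qH pH] .
    then have a2: "ipH p q = 0" using a1 by simp
    have qpH: "q + p \<in> Hs" using csH qH pH unfolding csubsp_def by blast
    have "ipH y y = ipH (q + p) (q + p)" by (simp only: yq[symmetric])
    also have "\<dots> = ipH q (q + p) + ipH p (q + p)" by (rule sq_addl[OF sqH csH qH pH qpH])
    also have "\<dots> = (ipH q q + ipH q p) + (ipH p q + ipH p p)"
      by (simp only: sq_addr[OF sqH csH qH qH pH] sq_addr[OF sqH csH pH qH pH])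
    also have "\<dots> = ipH (y - p) (y - p) + ipH p p" using a1 a2 unfolding q_def by simp
    finally have "Re (ipH y y) = Re (ipH (y - p) (y - p)) + Re (ipH p p)" by simp
    then have "Re (ipH (y - p) (y - p)) \<le> Re (ipH y y)" using ip_Re_nonneg[OF ciH csH pH] by simp
    then show ?thesis unfolding oeq ip_norm_def by (rule real_sqrt_le_mono)
  qed
  define S where "S = solmap_norm ip0 ipH Hs (a l)"
  define K where "K = (1 + Cqo) * S"
  have n0pos: "0 < ip_norm ip0 f" if "f \<noteq> 0" for f
    using ipn_pos[OF ci0 cs0 _ that] by simp
  have solb: "ip_norm ipH u \<le> S * ip_norm ip0 f"
    if f: "f \<noteq> 0" and u: "u \<in> Hs" "\<forall>v\<in>Hs. a l u v = ip0 f v" for f u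
  proof -
    let ?Q = "{ip_norm ipH u / ip_norm ip0 f | u f. f \<noteq> 0 \<and> u \<in> Hs \<and> (\<forall>v\<in>Hs. a l u v = ip0 f v)}"
    obtain C where C: "\<forall>f u. u \<in> Hs \<and> (\<forall>v\<in>Hs. a l u v = ip0 f v) \<longrightarrow> ip_norm ipH u \<le> C * ip_norm ip0 f"
      using sol_bounded by blast
    have bdd: "bdd_above ?Q"
    proof (rule bdd_aboveI)
      fix r assume "r \<in> ?Q"
      then obtain u' f' where r: "r = ip_norm ipH u' / ip_norm ip0 f'" and f': "f' \<noteq> 0"
        and u': "u' \<in> Hs" "\<forall>v\<in>Hs. a l u' v = ip0 f' v" by blast
      have "ip_norm ipH u' \<le> C * ip_norm ip0 f'" using C u' by blast
      then show "r \<le> C" unfolding r using n0pos[OF f'] by (simp add: divide_le_eq)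
    qed
    have mem: "ip_norm ipH u / ip_norm ip0 f \<in> ?Q" using f u by blast
    have "ip_norm ipH u / ip_norm ip0 f \<le> Sup ?Q" by (rule cSup_upper[OF mem bdd])
    then have "ip_norm ipH u / ip_norm ip0 f \<le> S" unfolding S_def solmap_norm_def .
    then show ?thesis using n0pos[OF f] by (simp add: divide_le_eq mult.commute)
  qed
  have galK: "\<exists>uN\<in>span B0. (\<forall>v\<in>span B0. a l uN v = ip0 w v) \<and> ip_norm ipH uN \<le> K * ip_norm ip0 w"
    if w: "w \<noteq> 0" for w
  proof -
    obtain u where u: "u \<in> Hs" "\<forall>v\<in>Hs. a l u v = ip0 w v" using solvable by blast
    obtain uN where uN: "uN \<in> HN N" "\<forall>vN\<in>HN N. a l uN vN = ip0 w vN" using galerkin by blast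
    have est: "ip_norm ipH (u - uN) \<le> Cqo * ip_norm ipH (u - oproj ipH (HN N) u)"
      using galerkin uN u by blast
    have uNH: "uN \<in> Hs" using uN(1) V subH by blast
    have "ip_norm ipH (u - oproj ipH (HN N) u) \<le> ip_norm ipH u" by (rule proj[OF u(1)])
    then have est2: "ip_norm ipH (u - uN) \<le> Cqo * ip_norm ipH u"
      using est Cqo by (meson mult_left_mono less_imp_le order_trans)
    have uuN: "u - uN \<in> Hs" by (rule csubsp_diff[OF csH u(1) uNH])
    have "ip_norm ipH (u - (u - uN)) \<le> ip_norm ipH u + ip_norm ipH (u - uN)"
      by (rule ipn_tri_diff[OF ciH csH u(1) uuN])
    then have "ip_norm ipH uN \<le> (1 + Cqo) * ip_norm ipH u" using est2 by (simp add: algebra_simps)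
    also have "\<dots> \<le> (1 + Cqo) * (S * ip_norm ip0 w)"
      using solb[OF w u] Cqo by (intro mult_left_mono) auto
    finally have "ip_norm ipH uN \<le> K * ip_norm ip0 w" unfolding K_def by (simp add: mult.assoc)
    then show ?thesis using uN V by blast
  qed
  have rhs: "1 / (inverse (CG1 l) * (1 + CG2 l * (1 + Cqo) * solmap_norm ip0 ipH Hs (a l)))
      = CG1 l / (1 + CG2 l * K)"
    unfolding K_def S_def by (simp add: divide_inverse mult.assoc)
  show "infsup (a l) (ip_norm ipH) (HN N) \<ge>
           ereal (1 / (inverse (CG1 l) *
             (1 + CG2 l * (1 + Cqo) * solmap_norm ip0 ipH Hs (a l))))"
    unfolding infsup_def rhs
  proof (rule INF_greatest)
    fix u assume uV: "u \<in> HN N - {0}"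
    have uB: "u \<in> span B0" and u0: "u \<noteq> 0" using uV V by auto
    have uH: "u \<in> Hs" using uB subH by blast
    have Spos: "0 \<le> S"
    proof -
      obtain z where z: "z \<in> Hs" "\<forall>v\<in>Hs. a l z v = ip0 u v" using solvable by blast
      have "ip_norm ipH z \<le> S * ip_norm ip0 u" by (rule solb[OF u0 z])
      moreover have "0 \<le> ip_norm ipH z" by (rule ipn_nonneg[OF ciH csH z(1)])
      ultimately have "0 \<le> S * ip_norm ip0 u" by linarith
      then show ?thesis using n0pos[OF u0] by (simp add: zero_le_mult_iff)
    qed
    have Kpos: "0 \<le> K" unfolding K_def using Spos Cqo by simp
    have T: "CG1 l * ip_norm ipH w \<le> G * (1 + CG2 l * K)"
      if w: "w \<in> span B0" and G: "0 \<le> G" and hG: "\<forall>v\<in>span B0. cmod (a l v w) \<le> G * ip_norm ipH v" for w G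
    proof (cases "w = 0")
      case True
      then show ?thesis using ipn_zero[OF ciH csH] G Kpos CG2 by simp
    next
      case False
      have wH: "w \<in> Hs" using w subH by blast
      obtain uN where uN: "uN \<in> span B0" "\<forall>v\<in>span B0. a l uN v = ip0 w v" "ip_norm ipH uN \<le> K * ip_norm ip0 w"
        using galK[OF False] by blast
      define n0 where "n0 = ip_norm ip0 w"
      define nH where "nH = ip_norm ipH w"
      have n0nn: "0 \<le> n0" unfolding n0_def by (rule ipn_nonneg[OF ci0 cs0]) simp
      have n0le: "n0 \<le> nH" unfolding n0_def nH_def using norm_le wH by blast
      have nHpos: "0 < nH" unfolding nH_def by (rule ipn_pos[OF ciH csH wH False])
      have "ip0 w w = complex_of_real (n0\<^sup>2)" unfolding n0_def by (rule ip_self_real[OF ci0 cs0]) simp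
      then have "n0\<^sup>2 = cmod (ip0 w w)" using n0nn by (simp add: norm_power)
      also have "\<dots> = cmod (a l uN w)" using uN(2) w by simp
      also have "\<dots> \<le> G * ip_norm ipH uN" using hG uN(1) by blast
      also have "\<dots> \<le> G * (K * n0)" using uN(3) G unfolding n0_def by (rule mult_left_mono)
      also have "\<dots> \<le> G * (K * nH)" using n0le G Kpos by (intro mult_left_mono) auto
      finally have n0sq: "n0\<^sup>2 \<le> G * (K * nH)" .
      have "CG1 l * nH\<^sup>2 \<le> cmod (a l w w + complex_of_real (CG2 l * n0\<^sup>2))"
        using gard[OF wH] unfolding n0_def nH_def .
      also have "\<dots> \<le> cmod (a l w w) + cmod (complex_of_real (CG2 l * n0\<^sup>2))" by (rule norm_triangle_ineq)
      also have "\<dots> = cmod (a l w w) + CG2 l * n0\<^sup>2"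
      proof -
        have "cmod (complex_of_real (CG2 l * n0\<^sup>2)) = \<bar>CG2 l * n0\<^sup>2\<bar>" by (rule norm_of_real)
        also have "\<dots> = CG2 l * n0\<^sup>2" using CG2 by simp
        finally show ?thesis by simp
      qed
      also have "\<dots> \<le> G * nH + CG2 l * (G * (K * nH))"
        using hG w n0sq CG2 unfolding nH_def by (intro add_mono mult_left_mono) auto
      also have "\<dots> = (G * (1 + CG2 l * K)) * nH" by (simp add: algebra_simps)
      finally have "(CG1 l * nH) * nH \<le> (G * (1 + CG2 l * K)) * nH" by (simp add: power2_eq_square mult.assoc)
      then have "CG1 l * nH \<le> G * (1 + CG2 l * K)" using nHpos by (rule mult_right_le_imp_le)
      then show ?thesis unfolding nH_def .
    qed
    have a_nd: "x = 0" if x: "x \<in> span B0" "\<forall>b\<in>B0. a l b x = 0" for x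
    proof -
      have xH: "x \<in> Hs" using x subH by blast
      have "\<And>v. v \<in> span B0 \<Longrightarrow> a l v x = ipH v 0"
        by (rule sq_ext[OF asq csH sqH subH xH zeroH]) (use x sq_zr[OF sqH csH] B0H in auto)
      then have "\<forall>v\<in>span B0. cmod (a l v x) \<le> 0 * ip_norm ipH v"
        using sq_zr[OF sqH csH] subH by auto
      then have "CG1 l * ip_norm ipH x \<le> 0 * (1 + CG2 l * K)" by (rule T[OF x(1) order_refl])
      then have "ip_norm ipH x \<le> 0" using CG1 by (simp add: mult_le_0_iff)
      then have "ip_norm ipH x = 0" using ipn_nonneg[OF ciH csH xH] by simp
      then show ?thesis by (rule ipn_eq0[OF ciH csH xH])
    qed
    obtain x where x: "x \<in> span B0" "\<forall>b\<in>B0. a l b x = ipH b u"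
      using riesz_basis[OF asq csH finB0 B0(2) subH a_nd, of "\<lambda>b. ipH b u"] by blast
    have xH: "x \<in> Hs" using x(1) subH by blast
    have ext: "\<And>v. v \<in> span B0 \<Longrightarrow> a l v x = ipH v u"
      by (rule sq_ext[OF asq csH sqH subH xH uH]) (use x in auto)
    have "\<forall>v\<in>span B0. cmod (a l v x) \<le> ip_norm ipH u * ip_norm ipH v"
    proof
      fix v assume v: "v \<in> span B0"
      have vH: "v \<in> Hs" using v subH by blast
      have "cmod (a l v x) = cmod (ipH v u)" using ext[OF v] by simp
      also have "\<dots> \<le> ip_norm ipH v * ip_norm ipH u" by (rule cauchy_schwarz[OF ciH csH vH uH])
      finally show "cmod (a l v x) \<le> ip_norm ipH u * ip_norm ipH v" by (simp add: mult.commute)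
    qed
    then have Tx: "CG1 l * ip_norm ipH x \<le> ip_norm ipH u * (1 + CG2 l * K)"
      using T[OF x(1)] ipn_nonneg[OF ciH csH uH] by blast
    have auu: "a l u x = ipH u u" using ext[OF uB] .
    have x0: "x \<noteq> 0"
    proof
      assume "x = 0"
      then have "ipH u u = 0" using auu sq_zr[OF asq csH uH] by simp
      then show False using cinD(5)[OF ciH uH] u0 by blast
    qed
    have xB: "x \<in> HN N - {0}" using x(1) x0 V by blast
    define nu where "nu = ip_norm ipH u"
    define nx where "nx = ip_norm ipH x"
    have nupos: "0 < nu" unfolding nu_def by (rule ipn_pos[OF ciH csH uH u0])
    have nxpos: "0 < nx" unfolding nx_def by (rule ipn_pos[OF ciH csH xH x0])
    have Dpos: "0 < 1 + CG2 l * K" using CG2 Kpos by (simp add: add_pos_nonneg)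
    have "cmod (a l u x) = nu\<^sup>2" unfolding auu nu_def using ip_self_real[OF ciH csH uH] by (simp add: norm_power)
    then have ratio: "cmod (a l u x) / (nu * nx) = nu / nx" using nupos by (simp add: power2_eq_square)
    have "CG1 l / (1 + CG2 l * K) \<le> nu / nx"
      using Tx Dpos nxpos unfolding nu_def[symmetric] nx_def[symmetric] by (simp add: divide_le_eq le_divide_eq mult.commute)
    then have "CG1 l / (1 + CG2 l * K) \<le> cmod (a l u x) / (ip_norm ipH u * ip_norm ipH x)"
      using ratio unfolding nu_def nx_def by simp
    then show "ereal (CG1 l / (1 + CG2 l * K)) \<le>
        (SUP v\<in>HN N - {0}. ereal (cmod (a l u v) / (ip_norm ipH u * ip_norm ipH v)))"
      by (intro SUP_upper2[OF xB]) simp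
  qed
qed

end
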